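(* Let $\{\mathcal B^{(n)}\}_{n\in\mathbb N}$ be a sequence of infinite matrices $\mathcal B^{(n)}=(\mathcal B^{(n)}_{r,s})_{r,s\ge0}$ and let $b\in\mathbb N$ be such that $\mathcal B^{(n)}_{rs}=0$ whenever $|r-s|>b$, for all $n$. Let $\mathcal B^R$ be a right limit of $\{\mathcal B^{(n)}\}$ along a subsequence $\{n_j\}_j$, and let $M\in\mathbb N$. Then $$\lim_{j\to\infty}C_m^{(n_j)}(\mathcal B^{(n_j)})=D_m(\mathcal B^R_{bM})\quad\text{for }m=1,\dots,M.$$
   Context: $\mathcal B^R=(\mathcal B^R_{r,s})_{r,s\in\mathbb Z}$ is a right limit along $\{n_j\}$ if $\mathcal B^R_{r,s}=\lim_j\mathcal B^{(n_j)}_{n_j+r,n_j+s}$ for all $r,s\in\mathbb Z$ and $\mathcal B^R$ is bounded on $\ell^2(\mathbb Z)$. $\mathcal B^R_{N}$ is the truncation equal to $\mathcal B^R_{r,s}$ for $r,s\in\{-N,\dots,N\}$ and $0$ otherwise. $P_n$ is the projection onto the coordinates $0,\dots,n-1$; $P_-$ on $\ell^2(\mathbb Z)$ is the projection onto coordinates $r<0$. For $m\ge1$, $$C_m^{(n)}(\mathcal B)=\sum_{j=2}^m\frac{(-1)^j}{j}\sum_{\substack{l_1+\dots+l_j=m\\ l_i\ge1}}\frac{\operatorname{Tr}\mathcal B^{l_1}P_n\cdots\mathcal B^{l_j}P_n-\operatorname{Tr}\mathcal B^mP_n}{l_1!\cdots l_j!}$$ (zero for $m=1$), and for a finite-rank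 operator $F$ on $\ell^2(\mathbb Z)$, $$D_m(F)=\sum_{j=1}^m\frac{(-1)^j}{j}\sum_{\substack{l_1+\dots+l_j=m\\ l_i\ge1}}\frac{\operatorname{Tr}\big(\prod_{t=1}^jP_-F^{l_t}P_--P_-F^mP_-\big)}{l_1!\cdots l_j!}.$$ *)

theory Defs
  imports "HOL-Analysis.Analysis"
begin

text \<open>Infinite matrices over an index type 'i (nat for l^2(N), int for l^2(Z)),
  with complex entries. Products are given by the (possibly infinite) sum over
  the middle index; for the banded / finitely supported matrices occurring
  here these sums are finite.\<close>

type_synonym 'i imat = "'i \<Rightarrow> 'i \<Rightarrow> complex"

definition mmult :: "'i imat \<Rightarrow> 'i imat \<Rightarrow> 'i imat" where
  "mmult A B = (\<lambda>r t. \<Sum>\<^sub>\<infinity>k. A r k * B k t)"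

definition mone :: "'i imat" where
  "mone = (\<lambda>r t. if r = t then 1 else 0)"

fun mpow :: "'i imat \<Rightarrow> nat \<Rightarrow> 'i imat" where
  "mpow A 0 = mone"
| "mpow A (Suc l) = mmult A (mpow A l)"

definition mdiff :: "'i imat \<Rightarrow> 'i imat \<Rightarrow> 'i imat" where
  "mdiff A B = (\<lambda>r t. A r t - B r t)"

definition mtrace :: "'i imat \<Rightarrow> complex" where
  "mtrace A = (\<Sum>\<^sub>\<infinity>r. A r r)"

definition proj :: "'i set \<Rightarrow> 'i imat" where
  "proj S = (\<lambda>r t. if r = t \<and> r \<in> S then 1 else 0)"

definition Pn :: "nat \<Rightarrow> nat imat" where
  "Pn n = proj {..<n}"

definition Pminus :: "int imat" where
  "Pminus = proj {r. r < 0}"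

definition mprod_list :: "'i imat list \<Rightarrow> 'i imat" where
  "mprod_list As = foldr mmult As mone"

definition comps :: "nat \<Rightarrow> nat \<Rightarrow> nat list set" where
  "comps m j = {ls. length ls = j \<and> (\<forall>l\<in>set ls. l \<ge> 1) \<and> sum_list ls = m}"

definition factprod :: "nat list \<Rightarrow> complex" where
  "factprod ls = (\<Prod>l\<leftarrow>ls. of_nat (fact l))"

definition Cm :: "nat \<Rightarrow> nat \<Rightarrow> nat imat \<Rightarrow> complex" where
  "Cm m n B = (\<Sum>j=2..m. ((-1)^j / of_nat j) *
      (\<Sum>ls\<in>comps m j.
         (mtrace (mprod_list (map (\<lambda>l. mmult (mpow B l) (Pn n)) ls))
          - mtrace (mmult (mpow B m) (Pn n))) / factprod ls))"

definition Dm :: "nat \<Rightarrow> int imat \<Rightarrow> complex" where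
  "Dm m F = (\<Sum>j=1..m. ((-1)^j / of_nat j) *
      (\<Sum>ls\<in>comps m j.
         mtrace (mdiff (mprod_list (map (\<lambda>l. mmult (mmult Pminus (mpow F l)) Pminus) ls))
                       (mmult (mmult Pminus (mpow F m)) Pminus)) / factprod ls))"

definition l2_bounded :: "int imat \<Rightarrow> bool" where
  "l2_bounded A \<longleftrightarrow> (\<exists>C. \<forall>x :: int \<Rightarrow> complex. finite {s. x s \<noteq> 0} \<longrightarrow>
      ((\<lambda>r. (norm (\<Sum>\<^sub>\<infinity>s. A r s * x s))\<^sup>2) summable_on UNIV) \<and>
      (\<Sum>\<^sub>\<infinity>r. (norm (\<Sum>\<^sub>\<infinity>s. A r s * x s))\<^sup>2) \<le> C\<^sup>2 * (\<Sum>\<^sub>\<infinity>s. (norm (x s))\<^sup>2))"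

text \<open>Entries of a matrix on N, viewed with integer indices (0 at negative indices,
  which only matters for finitely many j since n_j \<rightarrow> \<infinity>).\<close>
definition ext_int :: "nat imat \<Rightarrow> int imat" where
  "ext_int A = (\<lambda>r s. if r \<ge> 0 \<and> s \<ge> 0 then A (nat r) (nat s) else 0)"

definition right_limit :: "(nat \<Rightarrow> nat imat) \<Rightarrow> (nat \<Rightarrow> nat) \<Rightarrow> int imat \<Rightarrow> bool" where
  "right_limit B ns BR \<longleftrightarrow> strict_mono ns \<and>
     (\<forall>r s. (\<lambda>j. ext_int (B (ns j)) (int (ns j) + r) (int (ns j) + s)) \<longlonglongrightarrow> BR r s) \<and>
     l2_bounded BR"

definition trunc :: "int imat \<Rightarrow> nat \<Rightarrow> int imat" where
  "trunc A N = (\<lambda>r s. if \<bar>r\<bar> \<le> int N \<and> \<bar>s\<bar> \<le> int N then A r s else 0)"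

end

theory Submission
  imports Defs
begin


lemma infsum_supp:
  assumes "finite S" "\<And>x. x \<notin> S \<Longrightarrow> f x = 0"
  shows "infsum f UNIV = sum f S"
proof -
  have "infsum f UNIV = infsum f S"
    by (rule infsum_cong_neutral) (use assms in auto)
  thus ?thesis using assms by simp
qed

lemma infsum_one:
  assumes "\<And>x. x \<noteq> a \<Longrightarrow> f x = 0"
  shows "infsum f UNIV = f a"
  using infsum_supp[of "{a}" f] assms by auto

lemma mmult_mone_right[simp]: "mmult X mone = X"
  unfolding mmult_def mone_def
  by (rule ext, rule ext, subst infsum_one[where a="_"]) auto

lemma mmult_mone_left[simp]: "mmult mone X = X"
  unfolding mmult_def mone_def
  by (rule ext, rule ext, subst infsum_one[where a="_"]) auto

lemma mmult_proj_right: "mmult X (proj S) r t = (if t \<in> S then X r t else 0)"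
  unfolding mmult_def proj_def
  by (subst infsum_one[where a=t]) auto

lemma mmult_proj_left: "mmult (proj S) X r t = (if r \<in> S then X r t else 0)"
  unfolding mmult_def proj_def
  by (subst infsum_one[where a=r]) auto

lemma mprod_single[simp]: "mprod_list [X] = X"
  by (simp add: mprod_list_def)

lemma mprod_Cons: "mprod_list (X # Xs) = mmult X (mprod_list Xs)"
  by (simp add: mprod_list_def)

lemma mprod_Nil: "mprod_list [] = mone"
  by (simp add: mprod_list_def)

lemma mprod_append: "mprod_list (Xs @ Ys) = foldr mmult Xs (mprod_list Ys)"
  by (simp add: mprod_list_def)

lemma mmult_row0: "(\<And>k. A r k = 0) \<Longrightarrow> mmult A X r t = 0"
  unfolding mmult_def by (rule infsum_0) auto

lemma mmult_col0: "(\<And>k. X k t = 0) \<Longrightarrow> mmult A X r t = 0"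
  unfolding mmult_def by (rule infsum_0) auto

definition banded :: "int imat \<Rightarrow> nat \<Rightarrow> bool" where
  "banded A w \<longleftrightarrow> (\<forall>r s. \<bar>r - s\<bar> > int w \<longrightarrow> A r s = 0)"

lemma banded_mono: "banded A w \<Longrightarrow> w \<le> v \<Longrightarrow> banded A v"
  unfolding banded_def by force

lemma banded_mone: "banded mone w"
  unfolding banded_def mone_def by auto

lemma banded_proj: "banded (proj S) w"
  unfolding banded_def proj_def by auto

lemma banded_mmult: "banded A w \<Longrightarrow> banded B v \<Longrightarrow> banded (mmult A B) (w + v)"
  unfolding banded_def mmult_def
  apply (intro allI impI infsum_0)
  subgoal for r s k
    by (cases "\<bar>r - k\<bar> > int w") auto
  done

lemma mmult_banded_sum:
  assumes "banded A w" "finite S" "{r - int w..r + int w} \<subseteq> S"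
  shows "mmult A X r t = (\<Sum>k\<in>S. A r k * X k t)"
  unfolding mmult_def
proof (rule infsum_supp)
  fix k assume "k \<notin> S"
  then have "k \<notin> {r - int w..r + int w}" using assms(3) by auto
  then have "\<bar>r - k\<bar> > int w" by auto
  then show "A r k * X k t = 0" using assms(1) by (simp add: banded_def)
qed (use assms in auto)

lemma mmult_assoc:
  assumes A: "banded A w" and B: "banded B v"
  shows "mmult (mmult A B) C = mmult A (mmult B C)"
proof (intro ext)
  fix r t
  define S where "S = {r - int (w+v)..r + int (w+v)}"
  define S1 where "S1 = {r - int w..r + int w}"
  have "mmult (mmult A B) C r t = (\<Sum>k\<in>S. mmult A B r k * C k t)"
    by (rule mmult_banded_sum[OF banded_mmult[OF A B]]) (auto simp: S_def)
  also have "\<dots> = (\<Sum>k\<in>S. (\<Sum>k'\<in>S1. A r k' * B k' k) * C k t)"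
    by (rule sum.cong, simp, subst mmult_banded_sum[OF A, of S1]) (auto simp: S1_def)
  also have "\<dots> = (\<Sum>k'\<in>S1. A r k' * (\<Sum>k\<in>S. B k' k * C k t))"
    by (simp add: sum_distrib_left sum_distrib_right mult.assoc sum.swap[of _ S])
  also have "\<dots> = (\<Sum>k'\<in>S1. A r k' * mmult B C k' t)"
    apply (rule sum.cong, simp)
    apply (subst mmult_banded_sum[OF B, of S])
    apply (auto simp: S_def S1_def)
    done
  also have "\<dots> = mmult A (mmult B C) r t"
    by (rule mmult_banded_sum[OF A, symmetric]) (auto simp: S1_def)
  finally show "mmult (mmult A B) C r t = mmult A (mmult B C) r t" .
qed



lemma banded_mpow: "banded X w \<Longrightarrow> banded (mpow X l) (l * w)"
proof (induction l)
  case 0 then show ?case by (simp add: banded_mone)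
next
  case (Suc l) then show ?case using banded_mmult[of X w "mpow X l" "l*w"] by (simp add: add.commute)
qed

lemma mpow_mmult: "banded X w \<Longrightarrow> mmult (mpow X l) W = foldr mmult (replicate l X) W"
proof (induction l)
  case 0 then show ?case by simp
next
  case (Suc l)
  have "mmult (mpow X (Suc l)) W = mmult X (mmult (mpow X l) W)"
    using mmult_assoc[OF Suc.prems banded_mpow[OF Suc.prems]] by simp
  then show ?case using Suc by simp
qed

lemma foldr_rep_mpow: "foldr mmult (replicate l X) (mpow X k) = mpow X (l + k)"
  by (induction l) auto

definition flatP :: "int imat \<Rightarrow> int imat \<Rightarrow> nat list \<Rightarrow> int imat list" where
  "flatP X Q ls = concat (map (\<lambda>l. replicate l X @ [Q]) ls)"

lemma flatP_Cons: "flatP X Q (l # ls) = replicate l X @ [Q] @ flatP X Q ls"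
  by (simp add: flatP_def)

lemma prod_flat:
  assumes X: "banded X w" and Q: "banded Q v"
  shows "mprod_list (map (\<lambda>l. mmult (mpow X l) Q) ls) = mprod_list (flatP X Q ls)"
proof (induction ls)
  case Nil then show ?case by (simp add: flatP_def)
next
  case (Cons l ls)
  have "mprod_list (map (\<lambda>l. mmult (mpow X l) Q) (l # ls))
      = mmult (mmult (mpow X l) Q) (mprod_list (flatP X Q ls))"
    using Cons by (simp add: mprod_Cons)
  also have "\<dots> = mmult (mpow X l) (mmult Q (mprod_list (flatP X Q ls)))"
    by (rule mmult_assoc[OF banded_mpow[OF X] Q])
  also have "\<dots> = foldr mmult (replicate l X) (mmult Q (mprod_list (flatP X Q ls)))"
    by (rule mpow_mmult[OF X])
  also have "\<dots> = mprod_list (flatP X Q (l # ls))"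
    by (simp add: flatP_Cons mprod_append mprod_Cons)
  finally show ?case .
qed

lemma prod_flat_mone: "mprod_list (flatP X mone ls) = mpow X (sum_list ls)"
proof (induction ls)
  case Nil then show ?case by (simp add: flatP_def mprod_Nil)
next
  case (Cons l ls)
  then show ?case by (simp add: flatP_Cons mprod_append mprod_Cons foldr_rep_mpow del: foldr_replicate)
qed

lemma banded_prod:
  "\<forall>(M,w)\<in>set ps. banded M w \<Longrightarrow> banded (mprod_list (map fst ps)) (sum_list (map snd ps))"
proof (induction ps)
  case Nil then show ?case by (simp add: mprod_Nil banded_mone)
next
  case (Cons p ps)
  obtain M w where p: "p = (M,w)" by force
  show ?case using Cons banded_mmult[of M w "mprod_list (map fst ps)"] by (simp add: p mprod_Cons)
qed

lemma local_agree:
  fixes xs :: "(int imat \<times> int imat \<times> nat) list"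
  assumes "\<forall>(M,M',w)\<in>set xs. banded M w \<and> banded M' w \<and> (\<forall>p\<in>J. \<forall>q\<in>J. M p q = M' p q)"
    and "\<forall>p i. i \<le> length xs \<longrightarrow> \<bar>p - r\<bar> \<le> int (sum_list (take i (map (snd \<circ> snd) xs)))
           \<longrightarrow> \<bar>p - t\<bar> \<le> int (sum_list (drop i (map (snd \<circ> snd) xs))) \<longrightarrow> p \<in> J"
  shows "mprod_list (map fst xs) r t = mprod_list (map (fst \<circ> snd) xs) r t"
  using assms
proof (induction xs arbitrary: r)
  case Nil then show ?case by simp
next
  case (Cons x ys)
  obtain M M' w where x: "x = (M,M',w)" by (cases x) auto
  define W where "W = sum_list (map (snd \<circ> snd) ys)"
  have bM: "banded M w" and bM': "banded M' w" and agr: "\<forall>p\<in>J. \<forall>q\<in>J. M p q = M' p q"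
    using Cons.prems(1) x by auto
  have b1: "banded (mprod_list (map fst ys)) W"
    using banded_prod[of "map (\<lambda>(M,M',w). (M,w)) ys"] Cons.prems(1)
    by (auto simp: W_def o_def case_prod_beta)
  have b2: "banded (mprod_list (map (fst \<circ> snd) ys)) W"
    using banded_prod[of "map (\<lambda>(M,M',w). (M',w)) ys"] Cons.prems(1)
    by (auto simp: W_def o_def case_prod_beta)
  define S where "S = {r - int w..r + int w}"
  have L: "mprod_list (map fst (x # ys)) r t = (\<Sum>k\<in>S. M r k * mprod_list (map fst ys) k t)"
    by (simp add: x mprod_Cons, rule mmult_banded_sum[OF bM]) (auto simp: S_def)
  have R: "mprod_list (map (fst \<circ> snd) (x # ys)) r t = (\<Sum>k\<in>S. M' r k * mprod_list (map (fst \<circ> snd) ys) k t)"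
    by (simp add: x mprod_Cons, rule mmult_banded_sum[OF bM']) (auto simp: S_def)
  have "(\<Sum>k\<in>S. M r k * mprod_list (map fst ys) k t) = (\<Sum>k\<in>S. M' r k * mprod_list (map (fst \<circ> snd) ys) k t)"
  proof (rule sum.cong)
    fix k assume kS: "k \<in> S"
    show "M r k * mprod_list (map fst ys) k t = M' r k * mprod_list (map (fst \<circ> snd) ys) k t"
    proof (cases "\<bar>k - t\<bar> > int W")
      case True
      then show ?thesis using b1 b2 by (simp add: banded_def)
    next
      case False
      have kr: "\<bar>k - r\<bar> \<le> int w" using kS by (auto simp: S_def)
      have rJ: "r \<in> J"
        using Cons.prems(2)[rule_format, of 0 r] False kr x by (auto simp: W_def)
      have kJ: "k \<in> J"
        using Cons.prems(2)[rule_format, of 1 k] False kr x by (auto simp: W_def)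
      have "mprod_list (map fst ys) k t = mprod_list (map (fst \<circ> snd) ys) k t"
      proof (rule Cons.IH)
        show "\<forall>(M,M',w)\<in>set ys. banded M w \<and> banded M' w \<and> (\<forall>p\<in>J. \<forall>q\<in>J. M p q = M' p q)"
          using Cons.prems(1) by auto
        show "\<forall>p i. i \<le> length ys \<longrightarrow> \<bar>p - k\<bar> \<le> int (sum_list (take i (map (snd \<circ> snd) ys)))
           \<longrightarrow> \<bar>p - t\<bar> \<le> int (sum_list (drop i (map (snd \<circ> snd) ys))) \<longrightarrow> p \<in> J"
        proof (intro allI impI)
          fix p i assume i: "i \<le> length ys"
            and h1: "\<bar>p - k\<bar> \<le> int (sum_list (take i (map (snd \<circ> snd) ys)))"
            and h2: "\<bar>p - t\<bar> \<le> int (sum_list (drop i (map (snd \<circ> snd) ys)))"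
          have "\<bar>p - r\<bar> \<le> int w + int (sum_list (take i (map (snd \<circ> snd) ys)))"
            using h1 kr by linarith
          then show "p \<in> J"
            using Cons.prems(2)[rule_format, of "Suc i" p] i h2 x by auto
        qed
      qed
      then show ?thesis using agr rJ kJ by simp
    qed
  qed simp
  then show ?case unfolding L R .
qed



definition tri :: "int imat \<Rightarrow> int imat \<Rightarrow> int imat \<Rightarrow> int imat \<Rightarrow> nat \<Rightarrow> nat list \<Rightarrow> (int imat \<times> int imat \<times> nat) list" where
  "tri X1 X2 Q1 Q2 b ls = concat (map (\<lambda>l. replicate l (X1, X2, b) @ [(Q1, Q2, 0)]) ls)"

lemma tri_fst: "map fst (tri X1 X2 Q1 Q2 b ls) = flatP X1 Q1 ls"
  by (induction ls) (auto simp: tri_def flatP_def)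

lemma tri_snd: "map (fst \<circ> snd) (tri X1 X2 Q1 Q2 b ls) = flatP X2 Q2 ls"
  by (induction ls) (auto simp: tri_def flatP_def)

lemma tri_w: "sum_list (map (snd \<circ> snd) (tri X1 X2 Q1 Q2 b ls)) = b * sum_list ls"
  by (induction ls) (auto simp: tri_def sum_list_replicate algebra_simps)

lemma tri_set: "x \<in> set (tri X1 X2 Q1 Q2 b ls) \<Longrightarrow> x = (X1,X2,b) \<or> x = (Q1,Q2,0)"
  by (auto simp: tri_def set_replicate_conv_if split: if_splits)

lemma take_drop_sum: "sum_list (take i xs) + sum_list (drop i xs) = (sum_list xs :: nat)"
  by (metis append_take_drop_id sum_list_append)

lemma foldr_col0: "(\<And>k. Y k t = 0) \<Longrightarrow> foldr mmult xs Y r t = 0"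
proof (induction xs arbitrary: r)
  case Nil then show ?case by simp
next
  case (Cons x xs) then show ?case by (simp add: mmult_col0)
qed

lemma flat_col0:
  assumes "ls \<noteq> []" "t \<ge> 0"
  shows "mprod_list (flatP X Pminus ls) r t = 0"
proof -
  obtain ls' l where ls: "ls = ls' @ [l]" using assms(1) by (metis rev_exhaust)
  have "flatP X Pminus ls = (flatP X Pminus ls' @ replicate l X) @ [Pminus]"
    by (simp add: ls flatP_def)
  then have "mprod_list (flatP X Pminus ls) = foldr mmult (flatP X Pminus ls' @ replicate l X) Pminus"
    by (simp add: mprod_append)
  then show ?thesis
    by (simp only:) (rule foldr_col0, use assms in \<open>auto simp: Pminus_def proj_def\<close>)
qed

lemma banded_trunc: "banded A b \<Longrightarrow> banded (trunc A N) b"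
  by (auto simp: banded_def trunc_def)

lemma far_case:
  assumes X: "banded X b" and r: "2 * r + int (b * sum_list ls) < 0"
  shows "mprod_list (flatP X Pminus ls) r r = mpow X (sum_list ls) r r"
proof -
  let ?xs = "tri X X Pminus mone b ls"
  have "mprod_list (map fst ?xs) r r = mprod_list (map (fst \<circ> snd) ?xs) r r"
  proof (rule local_agree[where J="{p. p < 0}"])
    show "\<forall>(M,M',w)\<in>set ?xs. banded M w \<and> banded M' w \<and> (\<forall>p\<in>{p. p<0}. \<forall>q\<in>{p. p<0}. M p q = M' p q)"
      using X banded_mone[of 0] banded_proj[of "{p. p<0}" 0]
      by (auto dest!: tri_set simp: Pminus_def proj_def mone_def)
    show "\<forall>p i. i \<le> length ?xs \<longrightarrow> \<bar>p - r\<bar> \<le> int (sum_list (take i (map (snd \<circ> snd) ?xs)))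
           \<longrightarrow> \<bar>p - r\<bar> \<le> int (sum_list (drop i (map (snd \<circ> snd) ?xs))) \<longrightarrow> p \<in> {p. p < 0}"
    proof (intro allI impI)
      fix p i
      assume h1: "\<bar>p - r\<bar> \<le> int (sum_list (take i (map (snd \<circ> snd) ?xs)))"
        and h2: "\<bar>p - r\<bar> \<le> int (sum_list (drop i (map (snd \<circ> snd) ?xs)))"
      have "int (sum_list (take i (map (snd \<circ> snd) ?xs))) + int (sum_list (drop i (map (snd \<circ> snd) ?xs)))
          = int (b * sum_list ls)"
        using take_drop_sum[of i "map (snd \<circ> snd) ?xs"] tri_w[of X X Pminus mone b ls] by linarith
      then show "p \<in> {p. p < 0}" using h1 h2 r by auto
    qed
  qed
  then show ?thesis by (simp add: tri_fst tri_snd prod_flat_mone)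
qed

lemma near_case:
  assumes A: "banded A b" and G: "G = trunc A N" and mN: "b * sum_list ls \<le> N"
    and r1: "r < 0" and r2: "2 * r + int (b * sum_list ls) \<ge> 0"
    and Q1: "banded Q1 0" and Q2: "banded Q2 0"
  shows "mprod_list (flatP A Q1 ls) r r = mprod_list (flatP G Q1 ls) r r"
proof -
  let ?xs = "tri A G Q1 Q1 b ls"
  have "mprod_list (map fst ?xs) r r = mprod_list (map (fst \<circ> snd) ?xs) r r"
  proof (rule local_agree[where J="{-int N..int N}"])
    show "\<forall>(M,M',w)\<in>set ?xs. banded M w \<and> banded M' w \<and> (\<forall>p\<in>{-int N..int N}. \<forall>q\<in>{-int N..int N}. M p q = M' p q)"
      using A Q1 G banded_trunc[OF A, of N] by (auto dest!: tri_set simp: trunc_def)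
    show "\<forall>p i. i \<le> length ?xs \<longrightarrow> \<bar>p - r\<bar> \<le> int (sum_list (take i (map (snd \<circ> snd) ?xs)))
           \<longrightarrow> \<bar>p - r\<bar> \<le> int (sum_list (drop i (map (snd \<circ> snd) ?xs))) \<longrightarrow> p \<in> {-int N..int N}"
    proof (intro allI impI)
      fix p i
      assume h1: "\<bar>p - r\<bar> \<le> int (sum_list (take i (map (snd \<circ> snd) ?xs)))"
        and h2: "\<bar>p - r\<bar> \<le> int (sum_list (drop i (map (snd \<circ> snd) ?xs)))"
      have "int (sum_list (take i (map (snd \<circ> snd) ?xs))) + int (sum_list (drop i (map (snd \<circ> snd) ?xs)))
          = int (b * sum_list ls)"
        using take_drop_sum[of i "map (snd \<circ> snd) ?xs"] tri_w[of A G Q1 Q1 b ls] by linarith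
      moreover have "int (b * sum_list ls) \<le> int N" using mN by (simp only: of_nat_le_iff)
      ultimately show "p \<in> {-int N..int N}" using h1 h2 r1 r2 by auto
    qed
  qed
  then show ?thesis by (simp add: tri_fst tri_snd)
qed

lemma pointwise:
  assumes A: "banded A b" and G: "G = trunc A N" and mN: "b * m \<le> N"
    and ls: "ls \<noteq> []" "sum_list ls = m"
  shows "mprod_list (flatP A Pminus ls) r r - (if r < 0 then mpow A m r r else 0)
       = mprod_list (flatP G Pminus ls) r r - (if r < 0 then mpow G m r r else 0)"
proof (cases "r < 0")
  case False
  then show ?thesis using flat_col0[OF ls(1)] by simp
next
  case rneg: True
  have bG: "banded G b" using G banded_trunc[OF A] by simp
  show ?thesis
  proof (cases "2 * r + int (b * sum_list ls) < 0")
    case True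
    then show ?thesis using far_case[OF A True] far_case[OF bG True] ls rneg by simp
  next
    case False
    then have f: "2 * r + int (b * sum_list ls) \<ge> 0" by simp
    have bP: "banded Pminus 0" by (simp add: Pminus_def banded_proj)
    have "mprod_list (flatP A Pminus ls) r r = mprod_list (flatP G Pminus ls) r r"
      by (rule near_case[OF A G _ rneg f bP bP]) (use mN ls in simp)
    moreover have "mprod_list (flatP A mone ls) r r = mprod_list (flatP G mone ls) r r"
      by (rule near_case[OF A G _ rneg f banded_mone banded_mone]) (use mN ls in simp)
    ultimately show ?thesis by (simp add: prod_flat_mone ls)
  qed
qed



definition rowz :: "int imat \<Rightarrow> nat \<Rightarrow> bool" where
  "rowz X c \<longleftrightarrow> (\<forall>r k. r < - int c \<longrightarrow> X r k = 0)"

lemma mpow_row0: "m \<ge> 1 \<Longrightarrow> rowz X c \<Longrightarrow> r < - int c \<Longrightarrow> mpow X m r t = 0"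
  by (cases m) (auto simp: rowz_def intro!: mmult_row0)

lemma flat_row0:
  assumes "ls \<noteq> []" "\<forall>l\<in>set ls. l \<ge> 1" "rowz X c" "r < - int c"
  shows "mprod_list (flatP X Q ls) r t = 0"
proof -
  obtain l ls' where ls: "ls = l # ls'" using assms(1) by (cases ls) auto
  obtain l' where l: "l = Suc l'" using assms(2) ls by (cases l) auto
  have "flatP X Q ls = X # (replicate l' X @ [Q] @ flatP X Q ls')"
    by (simp add: ls l flatP_Cons)
  then show ?thesis using assms(3,4) by (simp add: mprod_Cons rowz_def mmult_row0)
qed

definition fm :: "int imat \<Rightarrow> nat \<Rightarrow> nat list \<Rightarrow> nat \<Rightarrow> complex" where
  "fm G N ls m = (\<Sum>r\<in>{-int N..<0}. mprod_list (flatP G Pminus ls) r r - mpow G m r r)"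

lemma mtrace_supp: "finite U \<Longrightarrow> (\<And>r. r \<notin> U \<Longrightarrow> X r r = 0) \<Longrightarrow> mtrace X = (\<Sum>r\<in>U. X r r)"
  unfolding mtrace_def by (rule infsum_supp) auto

lemma trace_formula:
  assumes A: "banded A b" and rz: "rowz A c" and ls: "ls \<noteq> []" "\<forall>l\<in>set ls. l \<ge> 1" "sum_list ls = m"
    and U: "finite U" "{-int c..<0} \<subseteq> U"
  shows "mtrace (mprod_list (flatP A Pminus ls)) - mtrace (mmult (mpow A m) Pminus)
       = (\<Sum>r\<in>U. mprod_list (flatP A Pminus ls) r r - (if r < 0 then mpow A m r r else 0))"
proof -
  have m1: "m \<ge> 1" using ls by (cases ls) auto
  have out: "r \<notin> U \<Longrightarrow> r \<ge> 0 \<or> r < - int c" for r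
  proof -
    assume "r \<notin> U"
    then have "r \<notin> {-int c..<0}" using U(2) by blast
    then show ?thesis by auto
  qed
  have "mtrace (mprod_list (flatP A Pminus ls)) = (\<Sum>r\<in>U. mprod_list (flatP A Pminus ls) r r)"
    apply (rule mtrace_supp[OF U(1)])
    subgoal for r using out[of r] flat_col0[OF ls(1)] flat_row0[OF ls(1,2) rz] by auto
    done
  moreover have "mtrace (mmult (mpow A m) Pminus) = (\<Sum>r\<in>U. mmult (mpow A m) Pminus r r)"
    apply (rule mtrace_supp[OF U(1)])
    subgoal for r using out[of r] mpow_row0[OF m1 rz] by (auto simp: Pminus_def mmult_proj_right)
    done
  moreover have "(\<Sum>r\<in>U. mmult (mpow A m) Pminus r r) = (\<Sum>r\<in>U. (if r < 0 then mpow A m r r else 0))"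
    by (simp add: Pminus_def mmult_proj_right)
  ultimately show ?thesis by (simp add: sum_subtractf)
qed

lemma fm_eq:
  assumes G: "banded G b" and rz: "rowz G N" and ls: "ls \<noteq> []" "\<forall>l\<in>set ls. l \<ge> 1" "sum_list ls = m"
  shows "mtrace (mprod_list (flatP G Pminus ls)) - mtrace (mmult (mpow G m) Pminus) = fm G N ls m"
  unfolding fm_def by (subst trace_formula[OF G rz ls, of "{-int N..<0}"]) (auto intro: sum.cong)

lemma PZP: "mmult (mmult Pminus Z) Pminus = mmult Pminus (mmult Z Pminus)"
  by (intro ext) (auto simp: Pminus_def mmult_proj_right mmult_proj_left)

lemma prodP:
  assumes "Ys \<noteq> []" "\<forall>Y\<in>set Ys. \<forall>k t. t \<ge> 0 \<longrightarrow> Y k t = 0"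
  shows "mprod_list (map (mmult Pminus) Ys) = mmult Pminus (mprod_list Ys)"
  using assms
proof (induction Ys)
  case Nil then show ?case by simp
next
  case (Cons Y Ys)
  show ?case
  proof (cases "Ys = []")
    case True then show ?thesis by simp
  next
    case False
    then have IH: "mprod_list (map (mmult Pminus) Ys) = mmult Pminus (mprod_list Ys)"
      using Cons by auto
    have Y0: "\<And>k t. t \<ge> 0 \<Longrightarrow> Y k t = 0" using Cons.prems by auto
    show ?thesis
    proof (intro ext)
      fix r t
      have "mmult (mmult Pminus Y) (mmult Pminus (mprod_list Ys)) r t
          = mmult Pminus (mmult Y (mprod_list Ys)) r t"
      proof -
        let ?R = "mprod_list Ys"
        have e1: "mmult Pminus Y r k = (if r < 0 then Y r k else 0)" for k
          by (simp add: Pminus_def mmult_proj_left)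
        have e2: "mmult Pminus ?R k t = (if k < 0 then ?R k t else 0)" for k
          by (simp add: Pminus_def mmult_proj_left)
        have "mmult (mmult Pminus Y) (mmult Pminus ?R) r t
            = (\<Sum>\<^sub>\<infinity>k. mmult Pminus Y r k * mmult Pminus ?R k t)"
          unfolding mmult_def[of "mmult Pminus Y" "mmult Pminus ?R"] by simp
        also have "\<dots> = (\<Sum>\<^sub>\<infinity>k. (if r < 0 then Y r k * ?R k t else 0))"
          by (rule infsum_cong) (use Y0 in \<open>auto simp: e1 e2\<close>)
        also have "\<dots> = (if r < 0 then (\<Sum>\<^sub>\<infinity>k. Y r k * ?R k t) else 0)"
          by simp
        also have "\<dots> = (if r < 0 then mmult Y ?R r t else 0)"
          by (simp add: mmult_def)
        also have "\<dots> = mmult Pminus (mmult Y ?R) r t"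
          by (simp add: Pminus_def mmult_proj_left)
        finally show ?thesis .
      qed
      then show "mprod_list (map (mmult Pminus) (Y # Ys)) r t = mmult Pminus (mprod_list (Y # Ys)) r t"
        by (simp add: mprod_Cons IH)
    qed
  qed
qed



lemma D_side:
  assumes G: "banded G b" and rz: "rowz G N" and ls: "ls \<noteq> []" "\<forall>l\<in>set ls. l \<ge> 1" "sum_list ls = m"
  shows "mtrace (mdiff (mprod_list (map (\<lambda>l. mmult (mmult Pminus (mpow G l)) Pminus) ls))
                        (mmult (mmult Pminus (mpow G m)) Pminus)) = fm G N ls m"
proof -
  have m1: "m \<ge> 1" using ls by (cases ls) auto
  have bP: "banded Pminus 0" by (simp add: Pminus_def banded_proj)
  have "map (\<lambda>l. mmult (mmult Pminus (mpow G l)) Pminus) ls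
      = map (mmult Pminus) (map (\<lambda>l. mmult (mpow G l) Pminus) ls)"
    by (simp add: PZP)
  note e = this
  have p1: "mprod_list (map (mmult Pminus) (map (\<lambda>l. mmult (mpow G l) Pminus) ls))
      = mmult Pminus (mprod_list (map (\<lambda>l. mmult (mpow G l) Pminus) ls))"
    by (rule prodP) (use ls(1) in \<open>auto simp: Pminus_def mmult_proj_right\<close>)
  have X: "mprod_list (map (\<lambda>l. mmult (mmult Pminus (mpow G l)) Pminus) ls)
      = mmult Pminus (mprod_list (flatP G Pminus ls))"
    unfolding e p1 prod_flat[OF G bP] ..
  let ?X = "mmult Pminus (mprod_list (flatP G Pminus ls))"
  let ?Y = "mmult (mmult Pminus (mpow G m)) Pminus"
  have out: "r \<notin> {-int N..<0} \<Longrightarrow> r \<ge> 0 \<or> r < - int N" for r by auto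
  have "mtrace (mdiff ?X ?Y) = (\<Sum>r\<in>{-int N..<0}. mdiff ?X ?Y r r)"
    apply (rule mtrace_supp, simp)
    subgoal for r using out[of r] flat_row0[OF ls(1,2) rz] mpow_row0[OF m1 rz]
      by (auto simp: mdiff_def Pminus_def mmult_proj_right mmult_proj_left)
    done
  also have "\<dots> = fm G N ls m"
    unfolding fm_def
    by (rule sum.cong) (auto simp: mdiff_def Pminus_def mmult_proj_right mmult_proj_left)
  finally show ?thesis using X by simp
qed

definition sh :: "nat \<Rightarrow> nat imat \<Rightarrow> int imat" where
  "sh n X = (\<lambda>r s. ext_int X (int n + r) (int n + s))"

lemma bij_shift: "bij_betw (\<lambda>i::nat. int i - int n) UNIV {k. int n + k \<ge> 0}"
  unfolding bij_betw_def
proof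
  show "inj (\<lambda>i::nat. int i - int n)" by (auto simp: inj_def)
  show "range (\<lambda>i::nat. int i - int n) = {k. int n + k \<ge> 0}"
  proof (auto)
    fix k :: int assume "0 \<le> int n + k"
    then show "k \<in> range (\<lambda>i::nat. int i - int n)"
      by (intro image_eqI[of _ _ "nat (int n + k)"]) auto
  qed
qed

lemma infsum_shift:
  assumes "\<And>k. int n + k < 0 \<Longrightarrow> f k = 0"
  shows "infsum f UNIV = infsum (\<lambda>i::nat. f (int i - int n)) UNIV"
proof -
  have "infsum f UNIV = infsum f {k. int n + k \<ge> 0}"
    by (rule infsum_cong_neutral) (use assms in auto)
  also have "\<dots> = infsum (\<lambda>i::nat. f (int i - int n)) UNIV"
    by (rule infsum_reindex_bij_betw[OF bij_shift, symmetric])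
  finally show ?thesis .
qed

lemma sh_row: "int n + r < 0 \<Longrightarrow> sh n X r s = 0"
  by (simp add: sh_def ext_int_def)

lemma sh_col: "int n + s < 0 \<Longrightarrow> sh n X r s = 0"
  by (simp add: sh_def ext_int_def)

lemma sh_mmult: "mmult (sh n X) (sh n Y) = sh n (mmult X Y)"
proof (intro ext)
  fix r t
  show "mmult (sh n X) (sh n Y) r t = sh n (mmult X Y) r t"
  proof (cases "int n + r \<ge> 0 \<and> int n + t \<ge> 0")
    case False
    have "sh n (mmult X Y) r t = 0" using False by (auto simp: sh_def ext_int_def)
    moreover have "mmult (sh n X) (sh n Y) r t = 0"
    proof (cases "int n + r < 0")
      case True then show ?thesis by (rule_tac mmult_row0) (rule sh_row[OF True])
    next
      case f2: False
      then have "int n + t < 0" using False by auto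
      then show ?thesis by (rule_tac mmult_col0) (rule sh_col)
    qed
    ultimately show ?thesis by simp
  next
    case True
    have "mmult (sh n X) (sh n Y) r t = (\<Sum>\<^sub>\<infinity>i::nat. sh n X r (int i - int n) * sh n Y (int i - int n) t)"
      unfolding mmult_def by (rule infsum_shift) (auto simp: sh_def ext_int_def)
    also have "\<dots> = (\<Sum>\<^sub>\<infinity>i::nat. X (nat (int n + r)) i * Y i (nat (int n + t)))"
      using True by (intro infsum_cong) (auto simp: sh_def ext_int_def)
    also have "\<dots> = sh n (mmult X Y) r t"
      using True by (simp add: sh_def ext_int_def mmult_def)
    finally show ?thesis .
  qed
qed

lemma sh_mtrace: "mtrace (sh n X) = mtrace X"
proof -
  have "mtrace (sh n X) = (\<Sum>\<^sub>\<infinity>i::nat. sh n X (int i - int n) (int i - int n))"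
    unfolding mtrace_def by (rule infsum_shift) (auto simp: sh_def ext_int_def)
  also have "\<dots> = mtrace X" by (simp add: sh_def ext_int_def mtrace_def)
  finally show ?thesis .
qed

lemma sh_mone_right: "sh n (mmult X mone) = sh n X" by simp

lemma sh_mpow: "l \<ge> 1 \<Longrightarrow> sh n (mpow X l) = mpow (sh n X) l"
proof (induction l)
  case 0 then show ?case by simp
next
  case (Suc l)
  show ?case
  proof (cases l)
    case 0 then show ?thesis by simp
  next
    case (Suc l')
    then have "sh n (mpow X l) = mpow (sh n X) l" using Suc.IH by simp
    then show ?thesis by (simp add: sh_mmult[symmetric])
  qed
qed

lemma sh_prod: "Ys \<noteq> [] \<Longrightarrow> sh n (mprod_list Ys) = mprod_list (map (sh n) Ys)"
proof (induction Ys)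
  case Nil then show ?case by simp
next
  case (Cons Y Ys)
  show ?case
  proof (cases "Ys = []")
    case True then show ?thesis by simp
  next
    case False then show ?thesis using Cons by (simp add: mprod_Cons sh_mmult[symmetric])
  qed
qed

lemma sh_Pn: "sh n (Pn n) = proj {r. - int n \<le> r \<and> r < 0}"
  by (intro ext) (auto simp: sh_def ext_int_def Pn_def proj_def)

lemma mpow_col0: "l \<ge> 1 \<Longrightarrow> (\<And>r. A r s = 0) \<Longrightarrow> mpow A l r s = 0"
proof (induction l arbitrary: r)
  case 0 then show ?case by simp
next
  case (Suc l)
  show ?case
  proof (cases l)
    case 0 then show ?thesis using Suc by simp
  next
    case l: (Suc l')
    have "\<And>k. mpow A l k s = 0" using Suc.IH[OF _ Suc.prems(2)] l by simp
    then show ?thesis by (simp only: mpow.simps(2)) (rule mmult_col0)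
  qed
qed

lemma Qn_Pminus:
  assumes "l \<ge> 1"
  shows "mmult (mpow (sh n X) l) (proj {r. - int n \<le> r \<and> r < 0}) = mmult (mpow (sh n X) l) Pminus"
proof (intro ext)
  fix r t
  show "mmult (mpow (sh n X) l) (proj {r. - int n \<le> r \<and> r < 0}) r t = mmult (mpow (sh n X) l) Pminus r t"
  proof (cases "int n + t < 0")
    case True
    have "mpow (sh n X) l r t = 0" by (rule mpow_col0[OF assms]) (rule sh_col[OF True])
    then show ?thesis by (simp add: mmult_proj_right Pminus_def)
  next
    case False then show ?thesis by (simp add: mmult_proj_right Pminus_def)
  qed
qed

lemma C_side:
  assumes band: "banded (sh n X) b" and ls: "ls \<noteq> []" "\<forall>l\<in>set ls. l \<ge> 1" "sum_list ls = m"
    and mN: "b * m \<le> N"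
  shows "mtrace (mprod_list (map (\<lambda>l. mmult (mpow X l) (Pn n)) ls)) - mtrace (mmult (mpow X m) (Pn n))
       = fm (trunc (sh n X) N) N ls m"
proof -
  let ?A = "sh n X"
  let ?G = "trunc ?A N"
  have m1: "m \<ge> 1" using ls by (cases ls) auto
  have bP: "banded Pminus 0" by (simp add: Pminus_def banded_proj)
  have t1: "mtrace (mprod_list (map (\<lambda>l. mmult (mpow X l) (Pn n)) ls)) = mtrace (mprod_list (flatP ?A Pminus ls))"
  proof -
    have "map (sh n) (map (\<lambda>l. mmult (mpow X l) (Pn n)) ls) = map (\<lambda>l. mmult (mpow ?A l) Pminus) ls"
      using ls(2) by (auto simp: sh_mmult[symmetric] sh_mpow sh_Pn Qn_Pminus)
    note e = this
    have "mtrace (mprod_list (map (\<lambda>l. mmult (mpow X l) (Pn n)) ls))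
        = mtrace (sh n (mprod_list (map (\<lambda>l. mmult (mpow X l) (Pn n)) ls)))"
      by (rule sh_mtrace[symmetric])
    also have "\<dots> = mtrace (mprod_list (map (sh n) (map (\<lambda>l. mmult (mpow X l) (Pn n)) ls)))"
      by (subst sh_prod) (use ls(1) in auto)
    also have "\<dots> = mtrace (mprod_list (flatP ?A Pminus ls))"
      by (simp only: e prod_flat[OF band bP])
    finally show ?thesis .
  qed
  have t2: "mtrace (mmult (mpow X m) (Pn n)) = mtrace (mmult (mpow ?A m) Pminus)"
    using sh_mtrace[of n "mmult (mpow X m) (Pn n)", symmetric] m1
    by (simp add: sh_mmult[symmetric] sh_mpow sh_Pn Qn_Pminus)
  have rzA: "rowz ?A n" by (auto simp: rowz_def sh_row)
  have bG: "banded ?G b" by (rule banded_trunc[OF band])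
  have rzG: "rowz ?G N" by (auto simp: rowz_def trunc_def)
  define U where "U = {-(int n + int N)..<0}"
  have "mtrace (mprod_list (flatP ?A Pminus ls)) - mtrace (mmult (mpow ?A m) Pminus)
      = (\<Sum>r\<in>U. mprod_list (flatP ?A Pminus ls) r r - (if r < 0 then mpow ?A m r r else 0))"
    by (rule trace_formula[OF band rzA ls]) (auto simp: U_def)
  also have "\<dots> = (\<Sum>r\<in>U. mprod_list (flatP ?G Pminus ls) r r - (if r < 0 then mpow ?G m r r else 0))"
    by (rule sum.cong[OF refl], rule pointwise[OF band refl mN ls(1,3)])
  also have "\<dots> = mtrace (mprod_list (flatP ?G Pminus ls)) - mtrace (mmult (mpow ?G m) Pminus)"
    by (rule trace_formula[OF bG rzG ls, symmetric]) (auto simp: U_def)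
  also have "\<dots> = fm ?G N ls m" by (rule fm_eq[OF bG rzG ls])
  finally show ?thesis using t1 t2 by simp
qed



lemma mpow_rep: "mprod_list (replicate m X) = mpow X m"
  by (induction m) (auto simp: mprod_Cons mprod_Nil)

lemma tendsto_prodL:
  fixes Ls :: "((nat \<Rightarrow> int imat) \<times> int imat \<times> nat) list"
  assumes "\<forall>(f,L,w)\<in>set Ls. (\<forall>j. banded (f j) w) \<and> banded L w \<and> (\<forall>r s. (\<lambda>j. f j r s) \<longlonglongrightarrow> L r s)"
  shows "(\<lambda>j. mprod_list (map (\<lambda>p. fst p j) Ls) r t) \<longlonglongrightarrow> mprod_list (map (fst \<circ> snd) Ls) r t"
  using assms
proof (induction Ls arbitrary: r)
  case Nil then show ?case by (simp add: mprod_Nil)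
next
  case (Cons p Ls)
  obtain f L w where p: "p = (f,L,w)" by (cases p) auto
  have bf: "\<And>j. banded (f j) w" and bL: "banded L w" and cf: "\<And>r s. (\<lambda>j. f j r s) \<longlonglongrightarrow> L r s"
    using Cons.prems p by auto
  define S where "S = {r - int w..r + int w}"
  have e1: "\<And>j. mprod_list (map (\<lambda>p. fst p j) (p # Ls)) r t = (\<Sum>k\<in>S. f j r k * mprod_list (map (\<lambda>p. fst p j) Ls) k t)"
    by (simp add: p mprod_Cons, rule mmult_banded_sum[OF bf]) (auto simp: S_def)
  have e2: "mprod_list (map (fst \<circ> snd) (p # Ls)) r t = (\<Sum>k\<in>S. L r k * mprod_list (map (fst \<circ> snd) Ls) k t)"
    by (simp add: p mprod_Cons, rule mmult_banded_sum[OF bL]) (auto simp: S_def)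
  have "(\<lambda>j. \<Sum>k\<in>S. f j r k * mprod_list (map (\<lambda>p. fst p j) Ls) k t) \<longlonglongrightarrow> (\<Sum>k\<in>S. L r k * mprod_list (map (fst \<circ> snd) Ls) k t)"
    by (intro tendsto_sum tendsto_mult cf Cons.IH) (use Cons.prems in auto)
  then show ?case unfolding e1 e2 .
qed

definition triS :: "(nat \<Rightarrow> int imat) \<Rightarrow> int imat \<Rightarrow> int imat \<Rightarrow> nat \<Rightarrow> nat list \<Rightarrow> ((nat \<Rightarrow> int imat) \<times> int imat \<times> nat) list" where
  "triS Gs G Q b ls = concat (map (\<lambda>l. replicate l (Gs, G, b) @ [(\<lambda>_. Q, Q, 0)]) ls)"

lemma triS_fst: "map (\<lambda>p. fst p j) (triS Gs G Q b ls) = flatP (Gs j) Q ls"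
  by (induction ls) (auto simp: triS_def flatP_def)

lemma triS_snd: "map (fst \<circ> snd) (triS Gs G Q b ls) = flatP G Q ls"
  by (induction ls) (auto simp: triS_def flatP_def)

lemma triS_set: "x \<in> set (triS Gs G Q b ls) \<Longrightarrow> x = (Gs,G,b) \<or> x = (\<lambda>_. Q,Q,0)"
  by (auto simp: triS_def set_replicate_conv_if split: if_splits)

lemma tendsto_fm:
  assumes bGs: "\<And>j. banded (Gs j) b" and bG: "banded G b" and c: "\<And>r s. (\<lambda>j. Gs j r s) \<longlonglongrightarrow> G r s"
  shows "(\<lambda>j. fm (Gs j) N ls m) \<longlonglongrightarrow> fm G N ls m"
proof -
  have bP: "banded Pminus 0" by (simp add: Pminus_def banded_proj)
  have t1: "(\<lambda>j. mprod_list (flatP (Gs j) Pminus ls) r r) \<longlonglongrightarrow> mprod_list (flatP G Pminus ls) r r" for r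
    using tendsto_prodL[of "triS Gs G Pminus b ls" r r] bGs bG c bP
    by (auto simp: triS_fst triS_snd dest!: triS_set)
  have t2: "(\<lambda>j. mpow (Gs j) m r r) \<longlonglongrightarrow> mpow G m r r" for r
    using tendsto_prodL[of "replicate m (Gs, G, b)" r r] bGs bG c
    by (auto simp: mpow_rep[symmetric] set_replicate_conv_if o_def)
  show ?thesis unfolding fm_def
    by (intro tendsto_sum tendsto_diff t1 t2)
qed

lemma tendsto_div_const: "(f \<longlongrightarrow> l) F \<Longrightarrow> ((\<lambda>x. f x / (c::complex)) \<longlongrightarrow> l / c) F"
  using tendsto_mult_right[of f l F "inverse c"] by (simp add: divide_inverse)

lemma comps_props: "ls \<in> comps m j \<Longrightarrow> j \<ge> 1 \<Longrightarrow> ls \<noteq> [] \<and> (\<forall>l\<in>set ls. l \<ge> 1) \<and> sum_list ls = m"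
  by (auto simp: comps_def)

theorem lemma4p3:
  fixes B :: "nat \<Rightarrow> nat \<Rightarrow> nat \<Rightarrow> complex"
    and b M :: nat and ns :: "nat \<Rightarrow> nat" and BR :: "int \<Rightarrow> int \<Rightarrow> complex"
  assumes band: "\<And>n r s. \<bar>int r - int s\<bar> > int b \<Longrightarrow> B n r s = 0"
    and rl: "right_limit B ns BR"
  shows "\<forall>m\<in>{1..M}. (\<lambda>j. Cm m (ns j) (B (ns j))) \<longlonglongrightarrow> Dm m (trunc BR (b * M))"
proof
  fix m assume mM: "m \<in> {1..M}"
  define N where "N = b * M"
  have mN: "b * m \<le> N" using mM by (auto simp: N_def)
  have m1: "m \<ge> 1" using mM by auto
  have bsh: "banded (sh n (B n)) b" for n
    unfolding banded_def sh_def ext_int_def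
  proof (intro allI impI)
    fix r s assume h: "int b < \<bar>r - s\<bar>"
    show "(if 0 \<le> int n + r \<and> 0 \<le> int n + s then B n (nat (int n + r)) (nat (int n + s)) else 0) = 0"
    proof (cases "0 \<le> int n + r \<and> 0 \<le> int n + s")
      case True
      then have "\<bar>int (nat (int n + r)) - int (nat (int n + s))\<bar> = \<bar>r - s\<bar>" by simp
      then show ?thesis using band h True by simp
    qed auto
  qed
  have conv: "\<And>r s. (\<lambda>j. sh (ns j) (B (ns j)) r s) \<longlonglongrightarrow> BR r s"
    using rl unfolding right_limit_def sh_def by blast
  have bBR: "banded BR b"
    unfolding banded_def
  proof (intro allI impI)
    fix r s assume h: "int b < \<bar>r - s\<bar>"
    have "(\<lambda>j. sh (ns j) (B (ns j)) r s) \<longlonglongrightarrow> 0"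
      using bsh h by (simp add: banded_def)
    then show "BR r s = 0" using conv LIMSEQ_unique by blast
  qed
  define Gs where "Gs j = trunc (sh (ns j) (B (ns j))) N" for j
  define G where "G = trunc BR N"
  have bGs: "banded (Gs j) b" for j unfolding Gs_def by (rule banded_trunc[OF bsh])
  have bG: "banded G b" unfolding G_def by (rule banded_trunc[OF bBR])
  have rzG: "rowz G N" by (auto simp: rowz_def trunc_def G_def)
  have cG: "(\<lambda>j. Gs j r s) \<longlonglongrightarrow> G r s" for r s
  proof (cases "\<bar>r\<bar> \<le> int N \<and> \<bar>s\<bar> \<le> int N")
    case True then show ?thesis using conv[of r s] by (simp add: Gs_def G_def trunc_def)
  next
    case False
    then have "(\<lambda>j. Gs j r s) = (\<lambda>j. 0)" "G r s = 0" by (auto simp: Gs_def G_def trunc_def)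
    then show ?thesis by simp
  qed
  define T where "T H = (\<Sum>j=2..m. ((-1)^j / of_nat j) * (\<Sum>ls\<in>comps m j. fm H N ls m / factprod ls))" for H
  have C_eq: "Cm m n (B n) = T (trunc (sh n (B n)) N)" for n
    unfolding Cm_def T_def
    apply (rule sum.cong[OF refl])
    apply (rule arg_cong[where f="\<lambda>x. _ * x"])
    apply (rule sum.cong[OF refl])
    subgoal for j ls
      using C_side[OF bsh _ _ _ mN, of ls] comps_props[of ls m j] by auto
    done
  have D_eq: "Dm m G = T G"
  proof -
    have "Dm m G = (\<Sum>j=1..m. ((-1)^j / of_nat j) * (\<Sum>ls\<in>comps m j. (if j = 1 then 0 else fm G N ls m) / factprod ls))"
      unfolding Dm_def
      apply (rule sum.cong[OF refl])
      apply (rule arg_cong[where f="\<lambda>x. _ * x"])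
      apply (rule sum.cong[OF refl])
      subgoal premises prems for j ls
      proof (cases "j = 1")
        case True
        then have "ls = [m]" using prems
          by (auto simp: comps_def length_Suc_conv)
        then show ?thesis using True by (simp add: mdiff_def mtrace_def)
      next
        case False
        then show ?thesis using D_side[OF bG rzG, of ls m] comps_props[of ls m j] prems by auto
      qed
      done
    also have "\<dots> = T G"
      unfolding T_def using m1 by (subst sum.atLeast_Suc_atMost) (auto intro!: sum.cong)
    finally show ?thesis .
  qed
  have "(\<lambda>j. T (Gs j)) \<longlonglongrightarrow> T G"
    unfolding T_def
    by (intro tendsto_sum tendsto_mult_left tendsto_div_const tendsto_fm[OF bGs bG cG])
  then show "(\<lambda>j. Cm m (ns j) (B (ns j))) \<longlonglongrightarrow> Dm m (trunc BR (b * M))"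
    using C_eq D_eq by (simp add: Gs_def G_def N_def)
qed

end
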